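(* Let $n\ge k\ge 2$ be positive integers and let $x_1,x_2,\ldots,x_k$ be positive integers with $\sum_{i=1}^k x_i=n$. Then $$n-1\le \sum_{i=1}^{k-1}x_ix_{i+1}\le \begin{cases}\lfloor n/2\rfloor\cdot\lceil n/2\rceil & \text{if } k=2,3,\\ ab+k-5 & \text{if } k\ge 4,\end{cases}$$ where $a=\lfloor (n-k+4)/2\rfloor$ and $b=\lceil (n-k+4)/2\rceil$. Moreover, for any such $n$ and $k$, both the lower bound and the upper bound are attained by some choice of positive integers $x_1,\ldots,x_k$ summing to $n$. *)

theory Defs
  imports Main
begin

text \<open>Sequences x_1..x_k are modelled as functions nat => nat, only indices 1..k matter.\<close>

definition adj_sum :: "nat \<Rightarrow> (nat \<Rightarrow> nat) \<Rightarrow> nat" where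
  "adj_sum k x = (\<Sum>i=1..k-1. x i * x (i+1))"

definition upper_bd :: "nat \<Rightarrow> nat \<Rightarrow> nat" where
  "upper_bd n k = (if k \<le> 3 then (n div 2) * ((n + 1) div 2)
     else ((n + 4 - k) div 2) * ((n + 4 - k + 1) div 2) + k - 5)"

end

theory Submission imports Defs begin

lemma prod_bound:
  fixes p q :: nat
  shows "p * q \<le> ((p+q) div 2) * ((p+q+1) div 2)"
proof -
  obtain t where t: "p + q = 2*t \<or> p + q = 2*t+1" by (metis oddE evenE)
  then show ?thesis
  proof
    assume h: "p + q = 2*t"
    have "int p * int q \<le> int t * int t"
    proof -
      have "int q = 2 * int t - int p" using h by linarith
      hence "int p * int q = int p * (2 * int t - int p)" by simp
      hence "int p * int q = 2*int t*int p - int p * int p" by (simp add: right_diff_distrib algebra_simps)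
      moreover have "0 \<le> (int t - int p)*(int t - int p)" by simp
      ultimately show ?thesis by (simp add: algebra_simps)
    qed
    hence "p * q \<le> t * t" by (metis of_nat_le_iff of_nat_mult)
    moreover have "(p+q) div 2 = t" "(p+q+1) div 2 = t" using h by auto
    ultimately show ?thesis by simp
  next
    assume h: "p + q = 2*t+1"
    have "int p * int q \<le> int t * (int t + 1)"
    proof -
      have "int q = 2 * int t + 1 - int p" using h by linarith
      hence "int p * int q = int p * (2 * int t + 1 - int p)" by simp
      hence "int p * int q = 2*int t*int p + int p - int p * int p" by (simp add: right_diff_distrib algebra_simps)
      moreover have "0 \<le> (int t - int p) * (int t - int p + 1)"
        by (cases "int t - int p \<ge> 0") (auto simp: zero_le_mult_iff)
      ultimately show ?thesis by (simp add: algebra_simps)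
    qed
    hence "p * q \<le> t * (t+1)" by (metis of_nat_le_iff of_nat_mult of_nat_Suc Suc_eq_plus1 add.commute)
    moreover have "(p+q) div 2 = t" "(p+q+1) div 2 = t+1" using h by auto
    ultimately show ?thesis by simp
  qed
qed

lemma path_bound:
  fixes y :: "nat \<Rightarrow> nat"
  shows "(\<Sum>i=1..k-1. y i * y (i+1)) \<le> (\<Sum>i=1..k. if even i then y i else 0) * (\<Sum>i=1..k. if odd i then y i else 0)"
proof (induction k)
  case 0
  then show ?case by simp
next
  case (Suc k)
  show ?case
  proof (cases "k = 0")
    case True then show ?thesis by simp
  next
    case False
    let ?E = "\<Sum>i=1..k. if even i then y i else 0"
    let ?O = "\<Sum>i=1..k. if odd i then y i else 0"
    have L: "(\<Sum>i=1..Suc k-1. y i * y (i+1)) = (\<Sum>i=1..k-1. y i * y (i+1)) + y k * y (k+1)"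
      using False by (cases k) (auto)
    have E: "(\<Sum>i=1..Suc k. if even i then y i else 0) = ?E + (if even (Suc k) then y (Suc k) else 0)" by simp
    have O: "(\<Sum>i=1..Suc k. if odd i then y i else 0) = ?O + (if odd (Suc k) then y (Suc k) else 0)" by simp
    have mem1: "(if even k then y k else 0) \<le> ?E"
      using False by (intro member_le_sum) auto
    have mem2: "(if odd k then y k else 0) \<le> ?O"
      using False by (intro member_le_sum) auto
    note mem = mem1 mem2
    show ?thesis
    proof (cases "even k")
      case True
      hence "y k \<le> ?E" using mem by simp
      hence "y k * y (k+1) \<le> ?E * y (Suc k)" by simp
      hence "(\<Sum>i=1..k-1. y i * y (i+1)) + y k * y (k+1) \<le> ?E * ?O + ?E * y (Suc k)"
        using Suc.IH by (rule add_mono[rotated])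
      then show ?thesis using True unfolding L E O by (simp add: algebra_simps)
    next
      case False
      hence "y k \<le> ?O" using mem by simp
      hence "y k * y (k+1) \<le> ?O * y (Suc k)" by simp
      hence "(\<Sum>i=1..k-1. y i * y (i+1)) + y k * y (k+1) \<le> ?E * ?O + ?O * y (Suc k)"
        using Suc.IH by (rule add_mono[rotated])
      then show ?thesis using False unfolding L E O by (simp add: algebra_simps)
    qed
  qed
qed

lemma decomp:
  fixes x :: "nat \<Rightarrow> nat"
  assumes k: "2 \<le> k" and pos: "\<forall>i\<in>{1..k}. 0 < x i" and sm: "(\<Sum>i=1..k. x i) = n"
    and y_def: "y = (\<lambda>i. x i - 1)"
  shows "(\<Sum>i=1..k-1. x i * x (i+1)) = (\<Sum>i=1..k-1. y i * y (i+1)) + (\<Sum>i=1..k-1. y i) + (\<Sum>i=1..k-1. y (i+1)) + (k - 1)"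
    and "(\<Sum>i=1..k. y i) = n - k"
    and "(\<Sum>i=1..k-1. y i) \<le> n - k"
    and "(\<Sum>i=1..k-1. y (i+1)) \<le> n - k"
    and "n - k \<le> (\<Sum>i=1..k-1. y i) + (\<Sum>i=1..k-1. y (i+1))"
proof -
  have xy: "x i = y i + 1" if "i \<in> {1..k}" for i using pos that unfolding y_def by auto
  have "(\<Sum>i=1..k-1. x i * x (i+1)) = (\<Sum>i=1..k-1. y i * y (i+1) + y i + y (i+1) + 1)"
    by (rule sum.cong) (auto simp: xy)
  also have "\<dots> = (\<Sum>i=1..k-1. y i * y (i+1)) + (\<Sum>i=1..k-1. y i) + (\<Sum>i=1..k-1. y (i+1)) + (k - 1)"
    by (simp only: sum.distrib) simp
  finally show "(\<Sum>i=1..k-1. x i * x (i+1)) = (\<Sum>i=1..k-1. y i * y (i+1)) + (\<Sum>i=1..k-1. y i) + (\<Sum>i=1..k-1. y (i+1)) + (k - 1)" .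
  have "n = (\<Sum>i=1..k. y i + 1)" unfolding sm[symmetric] by (rule sum.cong) (auto simp: xy)
  also have "\<dots> = (\<Sum>i=1..k. y i) + k" by (simp only: sum.distrib) simp
  finally have Y: "(\<Sum>i=1..k. y i) = n - k" by simp
  show "(\<Sum>i=1..k. y i) = n - k" by (rule Y)
  have split1: "(\<Sum>i=1..k. y i) = (\<Sum>i=1..k-1. y i) + y k"
    using k by (cases k) auto
  have split2: "(\<Sum>i=1..k. y i) = y 1 + (\<Sum>i=1..k-1. y (i+1))"
  proof -
    have "(\<Sum>i=1..k. y i) = y 1 + (\<Sum>i=2..k. y i)" using k
      by (simp add: sum.atLeast_Suc_atMost numeral_2_eq_2)
    also have "(\<Sum>i=2..k. y i) = (\<Sum>i=1..k-1. y (i+1))"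
    proof -
      obtain j where j: "k = Suc j" using k by (cases k) auto
      have "(\<Sum>i=Suc 1..Suc j. y i) = (\<Sum>i=1..j. y (Suc i))" by (rule sum.shift_bounds_cl_Suc_ivl)
      thus ?thesis using j by (simp add: numeral_2_eq_2)
    qed
    finally show ?thesis .
  qed
  have mem: "y k \<le> (\<Sum>i=1..k-1. y (i+1))"
  proof -
    have "y ((k-1)+1) \<le> (\<Sum>i=1..k-1. y (i+1))"
      using k by (intro member_le_sum[where f="\<lambda>i. y (i+1)"]) auto
    thus ?thesis using k by simp
  qed
  show "(\<Sum>i=1..k-1. y i) \<le> n - k" using split1 Y by linarith
  show "(\<Sum>i=1..k-1. y (i+1)) \<le> n - k" using split2 Y by linarith
  show "n - k \<le> (\<Sum>i=1..k-1. y i) + (\<Sum>i=1..k-1. y (i+1))" using split1 Y mem by linarith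
qed

lemma EO_sum:
  fixes y :: "nat \<Rightarrow> nat"
  shows "(\<Sum>i=1..k. if even i then y i else 0) + (\<Sum>i=1..k. if odd i then y i else 0) = (\<Sum>i=1..k. y i)"
  by (simp only: sum.distrib[symmetric]) (rule sum.cong, auto)


lemma L_bound:
  fixes y :: "nat \<Rightarrow> nat"
  shows "(\<Sum>i=1..k-1. y i * y (i+1)) \<le> ((\<Sum>i=1..k. y i) div 2) * (((\<Sum>i=1..k. y i) + 1) div 2)"
  using path_bound[of y k] prod_bound[of "\<Sum>i=1..k. if even i then y i else 0" "\<Sum>i=1..k. if odd i then y i else 0"]
  unfolding EO_sum by linarith

lemma general_bounds:
  fixes x :: "nat \<Rightarrow> nat"
  assumes k: "2 \<le> k" and pos: "\<forall>i\<in>{1..k}. 0 < x i" and sm: "(\<Sum>i=1..k. x i) = n"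
  shows "n - 1 \<le> adj_sum k x"
    and "adj_sum k x \<le> ((n-k) div 2) * ((n-k+1) div 2) + 2*(n-k) + k - 1"
proof -
  define y where "y = (\<lambda>i. x i - 1)"
  note d = decomp[OF k pos sm y_def]
  have nk: "k \<le> n"
  proof -
    have "(\<Sum>i=1..k. (1::nat)) \<le> (\<Sum>i=1..k. x i)" using pos by (intro sum_mono) (simp add: Suc_le_eq)
    thus ?thesis using sm by simp
  qed
  show "n - 1 \<le> adj_sum k x" unfolding adj_sum_def d(1) using d(5) nk k by linarith
  have "(\<Sum>i=1..k-1. y i * y (i+1)) \<le> ((n-k) div 2) * ((n-k+1) div 2)"
    using L_bound[of y k] unfolding d(2) .
  thus "adj_sum k x \<le> ((n-k) div 2) * ((n-k+1) div 2) + 2*(n-k) + k - 1"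
    unfolding adj_sum_def d(1) using d(3) d(4) k by linarith
qed

lemma arith_aux: "(U::nat) = P + 2*(a+b) + 4 + k - 5 \<Longrightarrow> a + b = m \<Longrightarrow> 4 \<le> k \<Longrightarrow> U = P + 2*m + k - 1"
  by arith

lemma arith_aux2: "(p::nat) + q = m \<Longrightarrow> \<not> k \<le> 3 \<Longrightarrow> (p+1) + (p+1)*(q+1) + (q+1) + (k-4) = p*q + 2*m + k - 1"
proof -
  assume "p + q = m" "\<not> k \<le> 3"
  then have "k = (k - 4) + 4" by simp
  then obtain j where "k = j + 4" by blast
  thus ?thesis using \<open>p + q = m\<close> by (simp add: algebra_simps)
qed

lemma ub_eq:
  assumes "4 \<le> k" "k \<le> n"
  shows "upper_bd n k = ((n-k) div 2) * ((n-k+1) div 2) + 2*(n-k) + k - 1"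
proof -
  define m where "m = n - k"
  have n: "n + 4 - k = m + 4" using assms unfolding m_def by simp
  have a: "(m+4) div 2 = m div 2 + 2" and b: "(m+4+1) div 2 = (m+1) div 2 + 2" by simp_all
  have ab: "m div 2 + (m+1) div 2 = m" by simp
  have "upper_bd n k = (m div 2 + 2) * ((m+1) div 2 + 2) + k - 5"
    unfolding upper_bd_def using assms n a b by simp
  also have "(m div 2 + 2) * ((m+1) div 2 + 2) = (m div 2) * ((m+1) div 2) + 2 * (m div 2 + (m+1) div 2) + 4"
    by (simp add: algebra_simps)
  finally have "upper_bd n k = m div 2 * ((m + 1) div 2) + 2 * (m div 2 + (m + 1) div 2) + 4 + k - 5" .
  hence "upper_bd n k = (m div 2) * ((m+1) div 2) + 2*m + k - 1"
    using arith_aux[OF _ ab assms(1)] by blast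
  thus ?thesis unfolding m_def .
qed

lemma sum3: "(\<Sum>i=1..3::nat. f i) = f 1 + f 2 + (f 3::nat)"
  by (simp add: numeral_3_eq_3 numeral_2_eq_2)

lemma sum2: "(\<Sum>i=1..2::nat. f i) = f 1 + (f 2::nat)"
  by (simp add: numeral_2_eq_2)

theorem lemma3:
  fixes n k :: nat
  assumes "2 \<le> k" and "k \<le> n"
  shows "(\<forall>x :: nat \<Rightarrow> nat. (\<forall>i\<in>{1..k}. 0 < x i) \<and> (\<Sum>i=1..k. x i) = n \<longrightarrow>
            n - 1 \<le> adj_sum k x \<and> adj_sum k x \<le> upper_bd n k)
       \<and> (\<exists>x :: nat \<Rightarrow> nat. (\<forall>i\<in>{1..k}. 0 < x i) \<and> (\<Sum>i=1..k. x i) = n \<and> adj_sum k x = n - 1)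
       \<and> (\<exists>x :: nat \<Rightarrow> nat. (\<forall>i\<in>{1..k}. 0 < x i) \<and> (\<Sum>i=1..k. x i) = n \<and> adj_sum k x = upper_bd n k)"
proof (intro conjI allI impI)
  fix x :: "nat \<Rightarrow> nat"
  assume h: "(\<forall>i\<in>{1..k}. 0 < x i) \<and> (\<Sum>i=1..k. x i) = n"
  show "n - 1 \<le> adj_sum k x" using general_bounds(1)[OF assms(1)] h by blast
  show "adj_sum k x \<le> upper_bd n k"
  proof (cases "k \<le> 3")
    case False
    then show ?thesis using general_bounds(2)[OF assms(1)] h ub_eq[OF _ assms(2)] by simp
  next
    case True
    hence "k = 2 \<or> k = 3" using assms by auto
    then show ?thesis
    proof
      assume k2: "k = 2"
      have "adj_sum 2 x = x 1 * x 2" by (simp add: adj_sum_def numeral_2_eq_2)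
      moreover have "sum x {1..2} = x 1 + x 2" by (rule sum2)
      ultimately have "adj_sum k x = x 1 * x 2" "n = x 1 + x 2" using h k2 by (simp_all del: One_nat_def)
      thus ?thesis using prod_bound[of "x 1" "x 2"] k2 by (simp add: upper_bd_def)
    next
      assume k3: "k = 3"
      have "adj_sum 3 x = x 1 * x 2 + x 2 * x 3" by (simp add: adj_sum_def numeral_2_eq_2 numeral_3_eq_3)
      moreover have "sum x {1..3} = x 1 + x 2 + x 3" by (rule sum3)
      ultimately have "adj_sum k x = x 2 * (x 1 + x 3)" "n = x 2 + (x 1 + x 3)" using h k3
        by (simp_all del: One_nat_def add: algebra_simps)
      thus ?thesis using prod_bound[of "x 2" "x 1 + x 3"] k3 by (simp add: upper_bd_def)
    qed
  qed
next
  define x where "x = (\<lambda>i::nat. if i = 1 then n - k + 1 else (1::nat))"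
  have pos: "\<forall>i\<in>{1..k}. 0 < x i" unfolding x_def by auto
  have c1: "(\<Sum>i=2..j. x i) = j - 1" for j
  proof -
    have "(\<Sum>i=2..j. x i) = (\<Sum>i=2..j. 1)" by (rule sum.cong) (auto simp: x_def)
    thus ?thesis by simp
  qed
  have "(\<Sum>i=1..k. x i) = x 1 + (\<Sum>i=2..k. x i)"
    using assms by (simp add: sum.atLeast_Suc_atMost numeral_2_eq_2)
  hence s: "(\<Sum>i=1..k. x i) = n" using c1[of k] assms by (simp add: x_def)
  have "adj_sum k x = x 1 * x 2 + (\<Sum>i=2..k-1. x i * x (i+1))"
    unfolding adj_sum_def using assms by (simp add: sum.atLeast_Suc_atMost numeral_2_eq_2)
  also have "(\<Sum>i=2..k-1. x i * x (i+1)) = (\<Sum>i=2..k-1. 1)" by (rule sum.cong) (auto simp: x_def)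
  finally have "adj_sum k x = n - 1" using assms by (simp add: x_def)
  thus "\<exists>x :: nat \<Rightarrow> nat. (\<forall>i\<in>{1..k}. 0 < x i) \<and> (\<Sum>i=1..k. x i) = n \<and> adj_sum k x = n - 1"
    using pos s by blast
next
  show "\<exists>x :: nat \<Rightarrow> nat. (\<forall>i\<in>{1..k}. 0 < x i) \<and> (\<Sum>i=1..k. x i) = n \<and> adj_sum k x = upper_bd n k"
  proof (cases "k \<le> 3")
    case True
    hence "k = 2 \<or> k = 3" using assms by auto
    then show ?thesis
    proof
      assume k2: "k = 2"
      define x where "x = (\<lambda>i::nat. if i = 1 then n div 2 else (n+1) div 2)"
      have "(\<forall>i\<in>{1..k}. 0 < x i) \<and> (\<Sum>i=1..k. x i) = n \<and> adj_sum k x = upper_bd n k"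
      proof (intro conjI)
        show "\<forall>i\<in>{1..k}. 0 < x i" using k2 assms by (auto simp: x_def)
        have "sum x {1..2} = x 1 + x 2" by (rule sum2)
        thus "(\<Sum>i=1..k. x i) = n" using k2 by (simp add: x_def)
        have "adj_sum 2 x = x 1 * x 2" by (simp add: adj_sum_def numeral_2_eq_2)
        thus "adj_sum k x = upper_bd n k" using k2 by (simp add: x_def upper_bd_def)
      qed
      thus ?thesis by blast
    next
      assume k3: "k = 3"
      define x where "x = (\<lambda>i::nat. if i = 2 then n div 2 else if i = 1 then 1 else (n+1) div 2 - 1)"
      have "(\<forall>i\<in>{1..k}. 0 < x i)" using k3 assms by (auto simp: x_def)
      moreover have "(\<Sum>i=1..k. x i) = n"
      proof -
        have "sum x {1..3} = x 1 + x 2 + x 3" by (rule sum3)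
        thus ?thesis using k3 assms by (simp add: x_def)
      qed
      moreover have "adj_sum k x = upper_bd n k"
      proof -
        have "adj_sum 3 x = x 1 * x 2 + x 2 * x 3" by (simp add: adj_sum_def numeral_2_eq_2 numeral_3_eq_3)
        moreover have "x 2 * (x 1 + x 3) = (n div 2) * ((n+1) div 2)" using assms k3 by (simp add: x_def)
        ultimately show ?thesis using k3 by (simp add: upper_bd_def algebra_simps)
      qed
      ultimately show ?thesis by blast
    qed
  next
    case False
    define m where "m = n - k"
    define a where "a = m div 2 + 1"
    define b where "b = (m+1) div 2 + 1"
    have ab: "a + b = m + 2" unfolding a_def b_def by simp
    define x where "x = (\<lambda>i::nat. if i = 2 then a else if i = 3 then b else 1)"
    have pos: "\<forall>i\<in>{1..k}. 0 < x i" unfolding x_def a_def b_def by auto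
    have c1: "(\<Sum>i=4..j. x i) = j - 3" for j
    proof -
      have "(\<Sum>i=4..j. x i) = (\<Sum>i=4..j. 1)" by (rule sum.cong) (auto simp: x_def)
      thus ?thesis by simp
    qed
    have c2: "(\<Sum>i=4..j. x i * x (i+1)) = j - 3" for j
    proof -
      have "(\<Sum>i=4..j. x i * x (i+1)) = (\<Sum>i=4..j. 1)" by (rule sum.cong) (auto simp: x_def)
      thus ?thesis by simp
    qed
    have "(\<Sum>i=1..k. x i) = x 1 + x 2 + x 3 + (\<Sum>i=4..k. x i)"
      using False by (simp add: sum.atLeast_Suc_atMost numeral_2_eq_2 numeral_3_eq_3 eval_nat_numeral)
    hence s: "(\<Sum>i=1..k. x i) = n" using c1[of k] False assms ab unfolding m_def by (simp add: x_def)
    have "adj_sum k x = x 1 * x 2 + x 2 * x 3 + x 3 * x 4 + (\<Sum>i=4..k-1. x i * x (i+1))"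
      unfolding adj_sum_def using False by (simp add: sum.atLeast_Suc_atMost numeral_2_eq_2 numeral_3_eq_3 eval_nat_numeral)
    hence "adj_sum k x = a + a * b + b + (k - 4)" using c2[of "k-1"] by (simp add: x_def)
    also have "\<dots> = upper_bd n k"
    proof -
      have u: "upper_bd n k = (m div 2)*((m+1) div 2) + 2*m + k - 1"
        using ub_eq[of k n] False assms unfolding m_def by simp
      have "m div 2 + (m+1) div 2 = m" by simp
      thus ?thesis unfolding u a_def b_def using False arith_aux2 by blast
    qed
    finally show ?thesis using pos s by blast
  qed
qed

end
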